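(* Consider any game $((I,\mu),s,N',N)$ in which, for every permitted group size $N'\le n\le N$, the restricted surplus function $s_n=s|_{\mathcal{G}_n}$ is continuous on $\mathcal{G}_n$, and the duality relation $$\sup_{\tau\in\mathrm{T}}\sum_{n=N'}^N\int_{\mathcal{G}_n}s_n\,d\tau_n=\inf_{u\in\mathcal{U}}\int_I u\,d\mu,\qquad \mathcal{U}=\{u\in L^1(I,\mu):\textstyle\sum_{i\in G}u(i)\ge s(G),\ \forall G\in\mathcal{G}\}.$$ Any maximizer $\tau$ of the left-hand side is a stable assignment, and a continuous minimizer $u$ of the right-hand side gives a corresponding imputation. Conversely, any stable assignment $\tau$ solves the maximization problem, and any imputation $u$ associated with this stable assignment solves the minimization problem.
   Context: $I$ is a compact metric space of player types and $\mu$ is a non-negative finite Borel measure on $I$. $N\ge 2$ and $N'\le N$ are natural numbers. For $N'\le n\le N$, $\mathcal{G}_n$ is the set of multisets of cardinality $n$ with elements in $I$, identified with the quotient $I^n/\sim_n$ of $I^n$ by coordinate permutations (with its quotient metric), written $G=[i_1,\dots,i_n]$; $\mathcal{G}=\bigcup_{n=N'}^N\mathcal{G}_n$. $s$ is a non-negative function on $\mathcal{G}$ and $s_n=s|_{\mathcal{G}_n}$. For measurable $A\subset I$, $\mathcal{G}_n(A,k)$ is the set of $n$-person groups with exactly $k$ members whose types lie in $A$. $\mathrm{T}$ is the set of assignments: tuples $\tau=(\tau_{N'},\dots,\tau_N)$ of non-negative measures $\tau_n$ on $\mathcal{G}_n$ with $\sum_{n=N'}^N\sum_{k=0}^n k\,\tau_n(\mathcal{G}_n(A,k))=\mu(A)$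 for every measurable $A\subset I$. $\sum_{i\in G}u(i)$ means $\sum_{i\in I}G(i)u(i)$. An assignment $\tau$ is stable with imputation $u\in L^1(I,\mu)$ if (feasibility) $\sum_{i\in G}u(i)\le s(G)$ for all $G\in\mathrm{supp}(\tau)=\bigcup_n\mathrm{supp}(\tau_n)$ and (no-blocking) $\sum_{i\in G}u(i)\ge s(G)$ for all $G\in\mathcal{G}$. *)

theory Defs
  imports "HOL-Analysis.Analysis" "HOL-Probability.Probability" "HOL-Library.Multiset"
begin

definition Gn :: "'a set \<Rightarrow> nat \<Rightarrow> 'a multiset set" where
  "Gn I n = {G. size G = n \<and> set_mset G \<subseteq> I}"

definition Gall :: "'a set \<Rightarrow> nat \<Rightarrow> nat \<Rightarrow> 'a multiset set" where
  "Gall I N' N = (\<Union>n\<in>{N'..N}. Gn I n)"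

definition Gnk :: "'a set \<Rightarrow> nat \<Rightarrow> 'a set \<Rightarrow> nat \<Rightarrow> 'a multiset set" where
  "Gnk I n A k = {G \<in> Gn I n. size (filter_mset (\<lambda>i. i \<in> A) G) = k}"

definition tuple_top :: "'a::metric_space set \<Rightarrow> nat \<Rightarrow> (nat \<Rightarrow> 'a) topology" where
  "tuple_top I n = product_topology (\<lambda>_. top_of_set I) {..<n}"

definition tuple_mset :: "nat \<Rightarrow> (nat \<Rightarrow> 'a) \<Rightarrow> 'a multiset" where
  "tuple_mset n x = image_mset x (mset_set {..<n})"

text \<open>Quotient topology on G_n = I^n / permutations (the topology of the quotient metric).\<close>
definition Gtop :: "'a::metric_space set \<Rightarrow> nat \<Rightarrow> 'a multiset topology" where
  "Gtop I n = topology (\<lambda>U. U \<subseteq> Gn I n \<and>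
      openin (tuple_top I n) {x \<in> topspace (tuple_top I n). tuple_mset n x \<in> U})"

definition borel_top :: "'b topology \<Rightarrow> 'b measure" where
  "borel_top X = sigma (topspace X) {U. openin X U}"

definition msupp :: "'b topology \<Rightarrow> 'b measure \<Rightarrow> 'b set" where
  "msupp X M = {x \<in> topspace X. \<forall>U. openin X U \<and> x \<in> U \<longrightarrow> emeasure M U > 0}"

definition assignments :: "'a::metric_space set \<Rightarrow> 'a measure \<Rightarrow> nat \<Rightarrow> nat
    \<Rightarrow> (nat \<Rightarrow> 'a multiset measure) set" where
  "assignments I \<mu> N' N = {\<tau>. (\<forall>n\<in>{N'..N}. sets (\<tau> n) = sets (borel_top (Gtop I n))) \<and>
     (\<forall>A\<in>sets \<mu>. (\<Sum>n=N'..N. \<Sum>k=0..n. of_nat k * emeasure (\<tau> n) (Gnk I n A k)) = emeasure \<mu> A)}"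

definition surplus_value :: "('a multiset \<Rightarrow> real) \<Rightarrow> nat \<Rightarrow> nat \<Rightarrow> (nat \<Rightarrow> 'a multiset measure) \<Rightarrow> real" where
  "surplus_value s N' N \<tau> = (\<Sum>n=N'..N. \<integral>G. s G \<partial>(\<tau> n))"

definition gsum :: "('a \<Rightarrow> real) \<Rightarrow> 'a multiset \<Rightarrow> real" where
  "gsum u G = sum_mset (image_mset u G)"

definition dual_set :: "'a::metric_space set \<Rightarrow> 'a measure \<Rightarrow> ('a multiset \<Rightarrow> real) \<Rightarrow> nat \<Rightarrow> nat
    \<Rightarrow> ('a \<Rightarrow> real) set" where
  "dual_set I \<mu> s N' N = {u. integrable \<mu> u \<and> (\<forall>G\<in>Gall I N' N. gsum u G \<ge> s G)}"

definition stable :: "'a::metric_space set \<Rightarrow> 'a measure \<Rightarrow> ('a multiset \<Rightarrow> real) \<Rightarrow> nat \<Rightarrow> nat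
    \<Rightarrow> (nat \<Rightarrow> 'a multiset measure) \<Rightarrow> ('a \<Rightarrow> real) \<Rightarrow> bool" where
  "stable I \<mu> s N' N \<tau> u \<longleftrightarrow> \<tau> \<in> assignments I \<mu> N' N \<and> integrable \<mu> u \<and>
     (\<forall>n\<in>{N'..N}. \<forall>G\<in>msupp (Gtop I n) (\<tau> n). gsum u G \<le> s G) \<and>
     (\<forall>G\<in>Gall I N' N. gsum u G \<ge> s G)"

end

theory Submission
  imports Defs
begin

lemma istop_Gtop: "istopology (\<lambda>U. U \<subseteq> Gn I n \<and>
      openin (tuple_top I n) {x \<in> topspace (tuple_top I n). tuple_mset n x \<in> U})"
  unfolding istopology_def
proof (rule conjI; intro allI impI)
  let ?P = "\<lambda>S. {x \<in> topspace (tuple_top I n). tuple_mset n x \<in> S}"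
  fix S T assume a: "S \<subseteq> Gn I n \<and> openin (tuple_top I n) (?P S)"
     and b: "T \<subseteq> Gn I n \<and> openin (tuple_top I n) (?P T)"
  have "openin (tuple_top I n) (?P S \<inter> ?P T)"
    using a b by (intro openin_Int) simp_all
  moreover have "?P S \<inter> ?P T = ?P (S \<inter> T)" by auto
  ultimately show "S \<inter> T \<subseteq> Gn I n \<and> openin (tuple_top I n) (?P (S \<inter> T))"
    using a by auto
next
  let ?P = "\<lambda>S. {x \<in> topspace (tuple_top I n). tuple_mset n x \<in> S}"
  fix K assume K: "\<forall>U\<in>K. U \<subseteq> Gn I n \<and> openin (tuple_top I n) (?P U)"
  have "openin (tuple_top I n) (\<Union>(?P ` K))"
    using K by (intro openin_Union) auto
  moreover have "\<Union>(?P ` K) = ?P (\<Union>K)" by auto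
  ultimately show "\<Union>K \<subseteq> Gn I n \<and> openin (tuple_top I n) (?P (\<Union>K))"
    using K by auto
qed

lemma openin_Gtop: "openin (Gtop I n) U \<longleftrightarrow> U \<subseteq> Gn I n \<and>
      openin (tuple_top I n) {x \<in> topspace (tuple_top I n). tuple_mset n x \<in> U}"
  unfolding Gtop_def using topology_inverse'[OF istop_Gtop[of I n]] by simp

lemma topspace_tuple: "topspace (tuple_top I n) = PiE {..<n} (\<lambda>_. I)"
  unfolding tuple_top_def by simp

lemma tuple_mset_Gn: "x \<in> PiE {..<n} (\<lambda>_. I) \<Longrightarrow> tuple_mset n x \<in> Gn I n"
  unfolding tuple_mset_def Gn_def by auto

lemma tuple_mset_surj:
  assumes "G \<in> Gn I n" shows "\<exists>x \<in> PiE {..<n} (\<lambda>_. I). tuple_mset n x = G"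
proof -
  obtain xs where xs: "mset xs = G" using ex_mset by blast
  have len: "length xs = n" using assms xs unfolding Gn_def by auto
  have setxs: "set xs \<subseteq> I" using assms xs unfolding Gn_def by auto
  define x where "x = restrict (\<lambda>j. xs ! j) {..<n}"
  have "x \<in> PiE {..<n} (\<lambda>_. I)" unfolding x_def using setxs len by auto
  moreover have "tuple_mset n x = G"
  proof -
    have "tuple_mset n x = image_mset (\<lambda>j. xs ! j) (mset_set {..<n})"
      unfolding tuple_mset_def x_def by (intro image_mset_cong) auto
    also have "\<dots> = image_mset (\<lambda>j. xs ! j) (mset [0..<n])"
      by (simp add: lessThan_atLeast0 mset_upt)
    also have "\<dots> = mset (map (\<lambda>j. xs ! j) [0..<length xs])" using len by simp
    also have "\<dots> = G" using xs by (simp add: map_nth)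
    finally show ?thesis .
  qed
  ultimately show ?thesis by blast
qed

lemma topspace_Gtop: "topspace (Gtop I n) = Gn I n"
proof
  show "topspace (Gtop I n) \<subseteq> Gn I n"
  proof -
    have "openin (Gtop I n) (topspace (Gtop I n))" by simp
    then show ?thesis unfolding openin_Gtop by (rule conjunct1)
  qed
  have "openin (Gtop I n) (Gn I n)"
  proof -
    have "{x \<in> topspace (tuple_top I n). tuple_mset n x \<in> Gn I n} = topspace (tuple_top I n)"
      using tuple_mset_Gn[of _ n I] topspace_tuple[of I n] by auto
    then show ?thesis unfolding openin_Gtop by simp
  qed
  then show "Gn I n \<subseteq> topspace (Gtop I n)" by (simp add: openin_subset)
qed

lemma continuous_q: "continuous_map (tuple_top I n) (Gtop I n) (tuple_mset n)"
  unfolding continuous_map_def topspace_Gtop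
proof (intro conjI allI impI)
  show "tuple_mset n \<in> topspace (tuple_top I n) \<rightarrow> Gn I n"
    using tuple_mset_Gn[of _ n I] unfolding topspace_tuple by blast
  fix U assume "openin (Gtop I n) U"
  then show "openin (tuple_top I n) {x \<in> topspace (tuple_top I n). tuple_mset n x \<in> U}"
    unfolding openin_Gtop by simp
qed

lemma continuous_Gtop_iff:
  "continuous_map (Gtop I n) euclideanreal g \<longleftrightarrow>
   continuous_map (tuple_top I n) euclideanreal (g \<circ> tuple_mset n)"
proof
  assume "continuous_map (Gtop I n) euclideanreal g"
  then show "continuous_map (tuple_top I n) euclideanreal (g \<circ> tuple_mset n)"
    using continuous_q continuous_map_compose by blast
next
  assume c: "continuous_map (tuple_top I n) euclideanreal (g \<circ> tuple_mset n)"
  show "continuous_map (Gtop I n) euclideanreal g"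
    unfolding continuous_map_def
  proof (intro conjI allI impI)
    show "g \<in> topspace (Gtop I n) \<rightarrow> topspace euclideanreal" by simp
    fix V assume V: "openin euclideanreal V"
    have "{x \<in> topspace (tuple_top I n). tuple_mset n x \<in> {G \<in> topspace (Gtop I n). g G \<in> V}}
        = {x \<in> topspace (tuple_top I n). (g \<circ> tuple_mset n) x \<in> V}"
      using tuple_mset_Gn[of _ n I] unfolding topspace_tuple topspace_Gtop by auto
    moreover have "openin (tuple_top I n) {x \<in> topspace (tuple_top I n). (g \<circ> tuple_mset n) x \<in> V}"
      by (rule openin_continuous_map_preimage[OF c V])
    moreover have "{G \<in> topspace (Gtop I n). g G \<in> V} \<subseteq> Gn I n" unfolding topspace_Gtop by auto
    ultimately show "openin (Gtop I n) {G \<in> topspace (Gtop I n). g G \<in> V}"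
      unfolding openin_Gtop by simp
  qed
qed

lemma sets_borel_top: "sets (borel_top X) = sigma_sets (topspace X) {U. openin X U}"
  unfolding borel_top_def by (rule sets_measure_of) (auto dest: openin_subset)

lemma space_borel_top: "space (borel_top X) = topspace X"
  unfolding borel_top_def by (rule space_measure_of) (auto dest: openin_subset)

lemma openin_sets_borel_top: "openin X U \<Longrightarrow> U \<in> sets (borel_top X)"
  unfolding sets_borel_top by auto

lemma cont_measurable:
  assumes "continuous_map X euclideanreal g" shows "g \<in> borel_measurable (borel_top X)"
proof (rule borel_measurableI)
  fix S :: "real set" assume "open S"
  then have o: "openin X {x \<in> topspace X. g x \<in> S}"
    using openin_continuous_map_preimage[OF assms] by simp
  have eq: "g -` S \<inter> space (borel_top X) = {x \<in> topspace X. g x \<in> S}"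
    unfolding space_borel_top by auto
  show "g -` S \<inter> space (borel_top X) \<in> sets (borel_top X)"
    unfolding eq by (rule openin_sets_borel_top[OF o])
qed

definition cnt :: "'a set \<Rightarrow> 'a multiset \<Rightarrow> nat" where
  "cnt A G = size (filter_mset (\<lambda>i. i \<in> A) G)"

lemma Gnk_cnt: "Gnk I n A k = {G \<in> Gn I n. cnt A G = k}"
  unfolding Gnk_def cnt_def by simp

lemma cnt_tuple: "cnt A (tuple_mset n x) = card {j \<in> {..<n}. x j \<in> A}"
  unfolding cnt_def tuple_mset_def by (simp add: filter_mset_image_mset)

lemma cnt_sum: "real (cnt A G) = sum_mset (image_mset (\<lambda>x. indicator A x) G)"
  unfolding cnt_def by (induction G) (auto simp: indicator_def)

lemma cnt_le: "cnt A G \<le> size G"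
  unfolding cnt_def by (rule size_filter_mset_lesseq)

lemma space_bt: "space (borel_top (Gtop I n)) = Gn I n"
  by (simp add: space_borel_top topspace_Gtop)

lemma sum_le_count: "c \<le> n \<Longrightarrow> (\<Sum>k\<in>{1..n}. if k \<le> c then 1 else 0 :: real) = real c"
proof -
  assume "c \<le> n"
  then have "{1..n} \<inter> {k. k \<le> c} = {1..c}" by auto
  then show ?thesis by (simp add: sum.If_cases)
qed

lemma openin_count:
  assumes "open Op"
  shows "openin (tuple_top I n) {x \<in> topspace (tuple_top I n). k \<le> card {j \<in> {..<n}. x j \<in> Op}}"
proof -
  let ?X = "tuple_top I n"
  let ?B = "\<lambda>J. {x \<in> topspace ?X. \<forall>j\<in>J. x j \<in> Op}"
  have xI: "x j \<in> I" if "x \<in> topspace ?X" "j < n" for x j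
    using that unfolding topspace_tuple by (auto simp: PiE_iff)
  have eq: "{x \<in> topspace ?X. k \<le> card {j \<in> {..<n}. x j \<in> Op}} = (\<Union>J\<in>{J. J \<subseteq> {..<n} \<and> card J = k}. ?B J)"
  proof (intro equalityI subsetI)
    fix x assume x: "x \<in> {x \<in> topspace ?X. k \<le> card {j \<in> {..<n}. x j \<in> Op}}"
    then have "k \<le> card {j \<in> {..<n}. x j \<in> Op}" by simp
    then obtain J where J: "J \<subseteq> {j \<in> {..<n}. x j \<in> Op}" "card J = k"
      by (rule obtain_subset_with_card_n)
    then have "x \<in> ?B J" using x by blast
    moreover have "J \<in> {J. J \<subseteq> {..<n} \<and> card J = k}" using J by blast
    ultimately show "x \<in> (\<Union>J\<in>{J. J \<subseteq> {..<n} \<and> card J = k}. ?B J)" by blast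
  next
    fix x assume "x \<in> (\<Union>J\<in>{J. J \<subseteq> {..<n} \<and> card J = k}. ?B J)"
    then obtain J where J: "J \<subseteq> {..<n}" "card J = k" "x \<in> topspace ?X" "\<forall>j\<in>J. x j \<in> Op" by blast
    then have "J \<subseteq> {j \<in> {..<n}. x j \<in> Op}" by blast
    then have "card J \<le> card {j \<in> {..<n}. x j \<in> Op}" by (intro card_mono) auto
    then show "x \<in> {x \<in> topspace ?X. k \<le> card {j \<in> {..<n}. x j \<in> Op}}" using J by simp
  qed
  have opB: "openin ?X (?B J)" if J: "J \<subseteq> {..<n}" for J
  proof (cases "J = {}")
    case True
    then show ?thesis by simp
  next
    case False
    have pj: "openin ?X {x \<in> topspace ?X. x j \<in> I \<inter> Op}" if "j \<in> J" for j
    proof (rule openin_continuous_map_preimage)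
      show "continuous_map ?X (top_of_set I) (\<lambda>x. x j)"
        unfolding tuple_top_def using J that by (intro continuous_map_product_projection) auto
      show "openin (top_of_set I) (I \<inter> Op)" using assms by (auto simp: openin_open)
    qed
    have "?B J = (\<Inter>j\<in>J. {x \<in> topspace ?X. x j \<in> I \<inter> Op})"
    proof (intro equalityI subsetI)
      fix x assume "x \<in> ?B J" then show "x \<in> (\<Inter>j\<in>J. {x \<in> topspace ?X. x j \<in> I \<inter> Op})"
        using xI J by blast
    next
      fix x assume x: "x \<in> (\<Inter>j\<in>J. {x \<in> topspace ?X. x j \<in> I \<inter> Op})"
      obtain j0 where "j0 \<in> J" using False by blast
      then show "x \<in> ?B J" using x by blast
    qed
    moreover have "openin ?X (\<Inter>j\<in>J. {x \<in> topspace ?X. x j \<in> I \<inter> Op})"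
    proof (rule openin_Inter)
      show "finite ((\<lambda>j. {x \<in> topspace ?X. x j \<in> I \<inter> Op}) ` J)"
        using J finite_subset by blast
      show "(\<lambda>j. {x \<in> topspace ?X. x j \<in> I \<inter> Op}) ` J \<noteq> {}" using False by blast
      show "\<And>Y. Y \<in> (\<lambda>j. {x \<in> topspace ?X. x j \<in> I \<inter> Op}) ` J \<Longrightarrow> openin ?X Y"
        using pj by blast
    qed
    ultimately show ?thesis by simp
  qed
  have "openin ?X (\<Union>J\<in>{J. J \<subseteq> {..<n} \<and> card J = k}. ?B J)"
    by (rule openin_Union) (use opB in blast)
  then show ?thesis unfolding eq .
qed

lemma cnt_open_measurable:
  assumes "open Op"
  shows "(\<lambda>G. real (cnt (I \<inter> Op) G)) \<in> borel_measurable (borel_top (Gtop I n))"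
proof -
  let ?U = "\<lambda>k. {G \<in> Gn I n. k \<le> cnt (I \<inter> Op) G}"
  have op: "openin (Gtop I n) (?U k)" for k
  proof -
    have "{x \<in> topspace (tuple_top I n). tuple_mset n x \<in> ?U k}
        = {x \<in> topspace (tuple_top I n). k \<le> card {j \<in> {..<n}. x j \<in> Op}}"
    proof -
      have "card {j \<in> {..<n}. x j \<in> I \<inter> Op} = card {j \<in> {..<n}. x j \<in> Op}"
        if "x \<in> topspace (tuple_top I n)" for x
      proof -
        have "{j \<in> {..<n}. x j \<in> I \<inter> Op} = {j \<in> {..<n}. x j \<in> Op}"
          using that by (auto simp: topspace_tuple PiE_iff)
        then show ?thesis by simp
      qed
      then show ?thesis using tuple_mset_Gn[of _ n I]
        by (auto simp: cnt_tuple topspace_tuple)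
    qed
    then show ?thesis unfolding openin_Gtop using openin_count[OF assms, of I n k] by auto
  qed
  have meas: "(\<lambda>G. \<Sum>k\<in>{1..n}. indicator (?U k) G :: real) \<in> borel_measurable (borel_top (Gtop I n))"
    using op by (intro borel_measurable_sum borel_measurable_indicator openin_sets_borel_top) auto
  show ?thesis
  proof (rule measurable_cong[THEN iffD1, OF _ meas])
    fix G assume G: "G \<in> space (borel_top (Gtop I n))"
    then have Gn: "G \<in> Gn I n" by (simp add: space_bt)
    then have le: "cnt (I \<inter> Op) G \<le> n" using cnt_le[of "I \<inter> Op" G] by (auto simp: Gn_def)
    have "(\<Sum>k\<in>{1..n}. indicator (?U k) G :: real) = (\<Sum>k\<in>{1..n}. if k \<le> cnt (I \<inter> Op) G then 1 else 0)"
      using Gn by (intro sum.cong) (auto simp: indicator_def)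
    also have "\<dots> = real (cnt (I \<inter> Op) G)" using sum_le_count[OF le] .
    finally show "(\<Sum>k\<in>{1..n}. indicator (?U k) G :: real) = real (cnt (I \<inter> Op) G)" .
  qed
qed

lemma sums_mset:
  fixes f :: "nat \<Rightarrow> 'a \<Rightarrow> real"
  assumes "\<And>x. (\<lambda>i. f i x) sums g x"
  shows "(\<lambda>i. sum_mset (image_mset (f i) G)) sums sum_mset (image_mset g G)"
proof (induction G)
  case empty
  then show ?case by simp
next
  case (add x G)
  then show ?case using sums_add[OF assms[of x] add] by simp
qed

lemma cnt_measurable:
  assumes "A \<in> sigma_sets I ((\<inter>) I ` {S. open S})"
  shows "(\<lambda>G. real (cnt A G)) \<in> borel_measurable (borel_top (Gtop I n))"
proof -
  have ist: "Int_stable ((\<inter>) I ` {S. open S})"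
    unfolding Int_stable_def
  proof (intro ballI)
    fix a b assume "a \<in> (\<inter>) I ` {S. open S}" "b \<in> (\<inter>) I ` {S. open S}"
    then obtain A B where "open A" "open B" "a = I \<inter> A" "b = I \<inter> B" by auto
    then show "a \<inter> b \<in> (\<inter>) I ` {S. open S}" by (intro image_eqI[where x="A \<inter> B"]) auto
  qed
  have sub: "(\<inter>) I ` {S. open S} \<subseteq> Pow I" by auto
  show ?thesis
  using ist sub assms
proof (induction rule: sigma_sets_induct_disjoint)
  case (basic A)
  then show ?case using cnt_open_measurable by blast
next
  case empty
  then show ?case by (simp add: cnt_def)
next
  case (compl A)
  have sub: "A \<subseteq> I" using compl.hyps(1) sigma_sets_into_sp[of "(\<inter>) I ` {S. open S}" I] by auto
  have meas: "(\<lambda>G. real n - real (cnt A G)) \<in> borel_measurable (borel_top (Gtop I n))"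
    using compl.IH by (intro borel_measurable_diff borel_measurable_const)
  show ?case
  proof (rule measurable_cong[THEN iffD1, OF _ meas])
    fix G assume G: "G \<in> space (borel_top (Gtop I n))"
    then have Gn: "size G = n" "set_mset G \<subseteq> I" by (auto simp: space_bt Gn_def)
    have f: "filter_mset (\<lambda>i. i \<in> I - A) G = filter_mset (\<lambda>i. i \<notin> A) G"
      using Gn(2) by (intro filter_mset_cong) auto
    have "size G = size (filter_mset (\<lambda>i. i \<in> A) G + filter_mset (\<lambda>i. i \<notin> A) G)"
      by (rule arg_cong[where f=size]) (rule multiset_partition)
    then have "size G = cnt A G + size (filter_mset (\<lambda>i. i \<notin> A) G)"
      unfolding cnt_def by (simp only: size_union)
    then have "real (size G) = real (cnt A G) + real (size (filter_mset (\<lambda>i. i \<notin> A) G))"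
      by (metis of_nat_add)
    moreover have "cnt (I - A) G = size (filter_mset (\<lambda>i. i \<notin> A) G)"
      unfolding cnt_def f ..
    ultimately show "real n - real (cnt A G) = real (cnt (I - A) G)"
      using Gn(1) by linarith
  qed
next
  case (union A)
  have s: "(\<lambda>i. real (cnt (A i) G)) sums real (cnt (\<Union>i. A i) G)" for G
    unfolding cnt_sum
  proof (rule sums_mset)
    fix x show "(\<lambda>i. indicator (A i) x :: real) sums indicator (\<Union>i. A i) x"
      using union.hyps(1) by (intro indicator_sums) (auto simp: disjoint_family_on_def)
  qed
  show ?case
  proof (rule borel_measurable_LIMSEQ_real)
    fix G show "(\<lambda>m. \<Sum>i<m. real (cnt (A i) G)) \<longlonglongrightarrow> real (cnt (\<Union>i. A i) G)"
      using s[of G] unfolding sums_def .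
    fix m show "(\<lambda>G. \<Sum>i<m. real (cnt (A i) G)) \<in> borel_measurable (borel_top (Gtop I n))"
      using union.IH by (intro borel_measurable_sum) auto
  qed
qed
qed

definition Phi :: "('a \<Rightarrow> ennreal) \<Rightarrow> 'a multiset \<Rightarrow> ennreal" where
  "Phi f G = sum_mset (image_mset f G)"

lemma sets_mu_sigma:
  fixes I :: "'a::metric_space set"
  assumes "compact I" "sets \<mu> = sets (restrict_space borel I)"
  shows "sets \<mu> = sigma_sets I ((\<inter>) I ` {S. open S})"
proof -
  have "I \<in> sigma_sets UNIV {S. open S}"
    using assms(1) borel_closed[of I] compact_imp_closed[of I] by (simp add: sets_borel)
  then have "(\<inter>) I ` sigma_sets UNIV {S. open S} = sigma_sets I ((\<inter>) I ` {S. open S})"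
    by (rule sigma_sets_Int) simp
  then show ?thesis using assms(2) by (simp add: sets_restrict_space sets_borel)
qed

lemma Phi_indicator: "Phi (indicator A) G = of_nat (cnt A G)"
  unfolding Phi_def cnt_def by (induction G) (auto simp: indicator_def)

lemma Phi_cmult: "Phi (\<lambda>x. c * u x) G = c * Phi u G"
  unfolding Phi_def by (induction G) (auto simp: distrib_left)

lemma Phi_add: "Phi (\<lambda>x. v x + u x) G = Phi v G + Phi u G"
  unfolding Phi_def by (induction G) (auto simp: algebra_simps)

lemma Phi_mono: "(\<And>x. f x \<le> g x) \<Longrightarrow> Phi f G \<le> Phi g G"
  unfolding Phi_def by (rule sum_mset_mono) auto

lemma Phi_SUP:
  assumes "incseq U"
  shows "Phi (\<lambda>x. SUP i. U i x) G = (SUP i. Phi (U i) G)"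
proof (induction G)
  case empty
  then show ?case by (simp add: Phi_def)
next
  case (add x G)
  have i1: "incseq (\<lambda>i. U i x)" using assms by (auto simp: incseq_def le_fun_def)
  have i2: "incseq (\<lambda>i. Phi (U i) G)" using assms
    by (auto simp: incseq_def le_fun_def intro!: Phi_mono)
  have "Phi (\<lambda>x. SUP i. U i x) (add_mset x G) = (SUP i. U i x) + Phi (\<lambda>x. SUP i. U i x) G"
    by (simp add: Phi_def)
  also have "\<dots> = (SUP i. U i x) + (SUP i. Phi (U i) G)" using add by simp
  also have "\<dots> = (SUP i. U i x + Phi (U i) G)" using ennreal_SUP_add[OF i1 i2] by simp
  also have "\<dots> = (SUP i. Phi (U i) (add_mset x G))" by (simp add: Phi_def)
  finally show ?case .
qed

lemma Phi_cong: "(\<And>x. x \<in># G \<Longrightarrow> f x = g x) \<Longrightarrow> Phi f G = Phi g G"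
  unfolding Phi_def by (metis image_mset_cong)

lemma space_tau:
  assumes "\<tau> \<in> assignments I \<mu> N' N" "n \<in> {N'..N}"
  shows "space (\<tau> n) = Gn I n"
proof -
  have "sets (\<tau> n) = sets (borel_top (Gtop I n))" using assms unfolding assignments_def by blast
  then have "space (\<tau> n) = space (borel_top (Gtop I n))" by (rule sets_eq_imp_space_eq)
  then show ?thesis by (simp add: space_bt)
qed

lemma meas_tau:
  fixes f :: "'a::metric_space multiset \<Rightarrow> 'b::topological_space"
  assumes "\<tau> \<in> assignments I \<mu> N' N" "n \<in> {N'..N}"
  shows "f \<in> borel_measurable (\<tau> n) \<longleftrightarrow> f \<in> borel_measurable (borel_top (Gtop I n))"
proof -
  have "sets (\<tau> n) = sets (borel_top (Gtop I n))" using assms unfolding assignments_def by blast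
  then have "measurable (\<tau> n) borel = measurable (borel_top (Gtop I n)) (borel :: 'b measure)"
    by (rule measurable_cong_sets) simp
  then show ?thesis by simp
qed

lemma sets_tau:
  assumes "\<tau> \<in> assignments I \<mu> N' N" "n \<in> {N'..N}"
  shows "sets (\<tau> n) = sets (borel_top (Gtop I n))"
  using assms unfolding assignments_def by blast

lemma CV:
  assumes tau: "\<tau> \<in> assignments I \<mu> N' N" and sp: "space \<mu> = I"
    and ss: "sets \<mu> = sigma_sets I ((\<inter>) I ` {S. open S})"
    and f: "f \<in> borel_measurable \<mu>"
  shows "(\<forall>n\<in>{N'..N}. Phi f \<in> borel_measurable (\<tau> n)) \<and>
         (\<integral>\<^sup>+x. f x \<partial>\<mu>) = (\<Sum>n=N'..N. \<integral>\<^sup>+G. Phi f G \<partial>\<tau> n)"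
  using f
proof (induction rule: borel_measurable_induct)
  case (cong f g)
  have eq: "Phi f G = Phi g G" if "n \<in> {N'..N}" "G \<in> space (\<tau> n)" for n G
  proof (rule Phi_cong)
    fix x assume "x \<in># G"
    then have "x \<in> space \<mu>" using that space_tau[OF tau] sp by (auto simp: Gn_def)
    then show "f x = g x" using cong.hyps(3) by simp
  qed
  have m: "\<forall>n\<in>{N'..N}. Phi f \<in> borel_measurable (\<tau> n)"
  proof
    fix n assume n: "n \<in> {N'..N}"
    show "Phi f \<in> borel_measurable (\<tau> n)"
      using cong.IH n eq[OF n] by (subst measurable_cong[where g="Phi g"]) auto
  qed
  have "(\<integral>\<^sup>+x. f x \<partial>\<mu>) = (\<integral>\<^sup>+x. g x \<partial>\<mu>)" using cong.hyps(3) by (intro nn_integral_cong) simp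
  also have "\<dots> = (\<Sum>n=N'..N. \<integral>\<^sup>+G. Phi g G \<partial>\<tau> n)" using cong.IH by simp
  also have "\<dots> = (\<Sum>n=N'..N. \<integral>\<^sup>+G. Phi f G \<partial>\<tau> n)"
    using eq by (intro sum.cong refl nn_integral_cong) simp
  finally show ?case using m by simp
next
  case (set A)
  have Asig: "A \<in> sigma_sets I ((\<inter>) I ` {S. open S})" using set ss by simp
  have cm: "(\<lambda>G. real (cnt A G)) \<in> borel_measurable (\<tau> n)" if n: "n \<in> {N'..N}" for n
    by (subst meas_tau[OF tau n]) (rule cnt_measurable[OF Asig])
  have Gk: "Gnk I n A k \<in> sets (\<tau> n)" if n: "n \<in> {N'..N}" for n k
  proof -
    have "Gnk I n A k = (\<lambda>G. real (cnt A G)) -` {real k} \<inter> space (\<tau> n)"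
      unfolding Gnk_cnt space_tau[OF tau n] by auto
    moreover have "(\<lambda>G. real (cnt A G)) -` {real k} \<inter> space (\<tau> n) \<in> sets (\<tau> n)"
      by (rule measurable_sets[OF cm[OF n]]) simp
    ultimately show ?thesis by simp
  qed
  have m: "Phi (indicator A) \<in> borel_measurable (\<tau> n)" if n: "n \<in> {N'..N}" for n
  proof -
    have "(\<lambda>G. ennreal (real (cnt A G))) \<in> borel_measurable (\<tau> n)"
      using cm[OF n] by (rule measurable_compose[OF _ measurable_ennreal])
    then show ?thesis unfolding Phi_indicator ennreal_of_nat_eq_real_of_nat by simp
  qed
  have int: "(\<integral>\<^sup>+G. Phi (indicator A) G \<partial>\<tau> n) = (\<Sum>k=0..n. of_nat k * emeasure (\<tau> n) (Gnk I n A k))"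
    if n: "n \<in> {N'..N}" for n
  proof -
    have "(\<integral>\<^sup>+G. Phi (indicator A) G \<partial>\<tau> n) = (\<integral>\<^sup>+G. (\<Sum>k=0..n. of_nat k * indicator (Gnk I n A k) G) \<partial>\<tau> n)"
    proof (rule nn_integral_cong)
      fix G assume G: "G \<in> space (\<tau> n)"
      then have Gn: "G \<in> Gn I n" using space_tau[OF tau n] by simp
      then have le: "cnt A G \<le> n" using cnt_le[of A G] by (simp add: Gn_def)
      have "(\<Sum>k=0..n. of_nat k * indicator (Gnk I n A k) G :: ennreal) = (\<Sum>k=0..n. if k = cnt A G then of_nat k else 0)"
        using Gn by (intro sum.cong) (auto simp: indicator_def Gnk_cnt)
      also have "\<dots> = of_nat (cnt A G)" using le by (simp add: sum.delta')
      finally show "Phi (indicator A) G = (\<Sum>k=0..n. of_nat k * indicator (Gnk I n A k) G)"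
        by (simp add: Phi_indicator)
    qed
    also have "\<dots> = (\<Sum>k=0..n. \<integral>\<^sup>+G. of_nat k * indicator (Gnk I n A k) G \<partial>\<tau> n)"
      using Gk[OF n] by (intro nn_integral_sum) simp
    also have "\<dots> = (\<Sum>k=0..n. of_nat k * emeasure (\<tau> n) (Gnk I n A k))"
      using Gk[OF n] by (intro sum.cong refl nn_integral_cmult_indicator) simp
    finally show ?thesis .
  qed
  have "(\<integral>\<^sup>+x. indicator A x \<partial>\<mu>) = emeasure \<mu> A" using set by simp
  also have "\<dots> = (\<Sum>n=N'..N. \<Sum>k=0..n. of_nat k * emeasure (\<tau> n) (Gnk I n A k))"
    using tau set unfolding assignments_def by simp
  also have "\<dots> = (\<Sum>n=N'..N. \<integral>\<^sup>+G. Phi (indicator A) G \<partial>\<tau> n)"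
    using int by simp
  finally show ?case using m by simp
next
  case (mult u c)
  have m: "Phi (\<lambda>x. c * u x) \<in> borel_measurable (\<tau> n)" if n: "n \<in> {N'..N}" for n
  proof -
    have "(\<lambda>G. c * Phi u G) \<in> borel_measurable (\<tau> n)"
      using mult.IH n by (intro borel_measurable_times_ennreal borel_measurable_const) auto
    then show ?thesis unfolding Phi_cmult by simp
  qed
  have "(\<integral>\<^sup>+x. c * u x \<partial>\<mu>) = c * (\<integral>\<^sup>+x. u x \<partial>\<mu>)" using mult.hyps by (simp add: nn_integral_cmult)
  also have "\<dots> = c * (\<Sum>n=N'..N. \<integral>\<^sup>+G. Phi u G \<partial>\<tau> n)" using mult.IH by simp
  also have "\<dots> = (\<Sum>n=N'..N. c * \<integral>\<^sup>+G. Phi u G \<partial>\<tau> n)" by (simp add: sum_distrib_left)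
  also have "\<dots> = (\<Sum>n=N'..N. \<integral>\<^sup>+G. Phi (\<lambda>x. c * u x) G \<partial>\<tau> n)"
    unfolding Phi_cmult using mult.IH by (intro sum.cong refl nn_integral_cmult[symmetric]) auto
  finally show ?case using m by simp
next
  case (add u v)
  have m: "Phi (\<lambda>x. v x + u x) \<in> borel_measurable (\<tau> n)" if n: "n \<in> {N'..N}" for n
  proof -
    have "(\<lambda>G. Phi v G + Phi u G) \<in> borel_measurable (\<tau> n)"
      using add.IH n by (intro borel_measurable_add) auto
    then show ?thesis unfolding Phi_add by simp
  qed
  have "(\<integral>\<^sup>+x. v x + u x \<partial>\<mu>) = (\<integral>\<^sup>+x. v x \<partial>\<mu>) + (\<integral>\<^sup>+x. u x \<partial>\<mu>)"
    using add.hyps by (simp add: nn_integral_add)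
  also have "\<dots> = (\<Sum>n=N'..N. \<integral>\<^sup>+G. Phi v G \<partial>\<tau> n) + (\<Sum>n=N'..N. \<integral>\<^sup>+G. Phi u G \<partial>\<tau> n)"
    using add.IH by simp
  also have "\<dots> = (\<Sum>n=N'..N. (\<integral>\<^sup>+G. Phi v G \<partial>\<tau> n) + (\<integral>\<^sup>+G. Phi u G \<partial>\<tau> n))"
    by (simp add: sum.distrib)
  also have "\<dots> = (\<Sum>n=N'..N. \<integral>\<^sup>+G. Phi (\<lambda>x. v x + u x) G \<partial>\<tau> n)"
    unfolding Phi_add using add.IH by (intro sum.cong refl nn_integral_add[symmetric]) auto
  finally show ?case using m by simp
next
  case (seq U)
  have incU: "incseq U" using seq by blast
  have eqf: "Phi (SUP i. U i) = (\<lambda>G. SUP i. Phi (U i) G)"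
  proof
    fix G
    have "(SUP i. U i) = (\<lambda>x. SUP i. U i x)" by (rule ext) (simp add: SUP_apply image_image)
    then have "Phi (SUP i. U i) G = Phi (\<lambda>x. SUP i. U i x) G" by simp
    then show "Phi (SUP i. U i) G = (SUP i. Phi (U i) G)" using Phi_SUP[OF incU] by simp
  qed
  have inc: "incseq (\<lambda>i. Phi (U i))" using incU
    by (auto simp: incseq_def le_fun_def intro!: Phi_mono)
  have m: "Phi (SUP i. U i) \<in> borel_measurable (\<tau> n)" if n: "n \<in> {N'..N}" for n
    unfolding eqf using seq.IH n by (intro borel_measurable_SUP) auto
  have "(\<integral>\<^sup>+x. (SUP i. U i) x \<partial>\<mu>) = (\<integral>\<^sup>+x. (SUP i. U i x) \<partial>\<mu>)" by (simp add: SUP_apply image_image)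
  also have "\<dots> = (SUP i. \<integral>\<^sup>+x. U i x \<partial>\<mu>)"
    using seq.hyps by (intro nn_integral_monotone_convergence_SUP) auto
  also have "\<dots> = (SUP i. \<Sum>n=N'..N. \<integral>\<^sup>+G. Phi (U i) G \<partial>\<tau> n)" using seq.IH by simp
  also have "\<dots> = (\<Sum>n=N'..N. SUP i. \<integral>\<^sup>+G. Phi (U i) G \<partial>\<tau> n)"
  proof (rule ennreal_SUP_sum)
    fix n assume n: "n \<in> {N'..N}"
    show "incseq (\<lambda>i. \<integral>\<^sup>+G. Phi (U i) G \<partial>\<tau> n)"
      using inc by (auto simp: incseq_def le_fun_def intro!: nn_integral_mono)
  qed
  also have "\<dots> = (\<Sum>n=N'..N. \<integral>\<^sup>+G. (SUP i. Phi (U i) G) \<partial>\<tau> n)"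
  proof (rule sum.cong[OF refl])
    fix n assume n: "n \<in> {N'..N}"
    show "(SUP i. \<integral>\<^sup>+G. Phi (U i) G \<partial>\<tau> n) = (\<integral>\<^sup>+G. (SUP i. Phi (U i) G) \<partial>\<tau> n)"
      using inc seq.IH n by (intro nn_integral_monotone_convergence_SUP[symmetric]) (auto simp: incseq_def le_fun_def)
  qed
  also have "\<dots> = (\<Sum>n=N'..N. \<integral>\<^sup>+G. Phi (SUP i. U i) G \<partial>\<tau> n)" unfolding eqf ..
  finally have "(\<integral>\<^sup>+x. (SUP i. U i) x \<partial>\<mu>) = (\<Sum>n=N'..N. \<integral>\<^sup>+G. Phi (SUP i. U i) G \<partial>\<tau> n)" .
  then show ?case using m by blast
qed

lemma sum_mset_nonneg': "(\<And>x. 0 \<le> f x) \<Longrightarrow> 0 \<le> sum_mset (image_mset f G :: real multiset)"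
  by (induction G) auto

lemma sum_mset_max0: "0 \<le> sum_mset (image_mset (\<lambda>x. max 0 (f x)) G :: real multiset)"
  by (rule sum_mset_nonneg') simp

lemma Phi_ennreal: "(\<And>x. 0 \<le> f x) \<Longrightarrow> Phi (\<lambda>x. ennreal (f x)) G = ennreal (sum_mset (image_mset f G))"
  unfolding Phi_def by (induction G) (auto simp: ennreal_plus sum_mset_nonneg')

lemma gsum_split: "gsum u G = sum_mset (image_mset (\<lambda>x. max 0 (u x)) G) - sum_mset (image_mset (\<lambda>x. max 0 (- u x)) G)"
  unfolding gsum_def by (induction G) (auto simp: max_def)

lemma pos_part_meas:
  assumes tau: "\<tau> \<in> assignments I \<mu> N' N" and sp: "space \<mu> = I"
    and ss: "sets \<mu> = sigma_sets I ((\<inter>) I ` {S. open S})"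
    and u: "u \<in> borel_measurable \<mu>" and n: "n \<in> {N'..N}"
  shows "(\<lambda>G. sum_mset (image_mset (\<lambda>x. max 0 (u x)) G)) \<in> borel_measurable (\<tau> n)"
    and "(\<integral>\<^sup>+G. ennreal (sum_mset (image_mset (\<lambda>x. max 0 (u x)) G)) \<partial>\<tau> n) = (\<integral>\<^sup>+G. Phi (\<lambda>x. ennreal (u x)) G \<partial>\<tau> n)"
proof -
  have e: "Phi (\<lambda>x. ennreal (u x)) G = ennreal (sum_mset (image_mset (\<lambda>x. max 0 (u x)) G))" for G
  proof -
    have "Phi (\<lambda>x. ennreal (u x)) G = Phi (\<lambda>x. ennreal (max 0 (u x))) G"
      by (simp add: ennreal_max_0)
    also have "\<dots> = ennreal (sum_mset (image_mset (\<lambda>x. max 0 (u x)) G))"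
      by (rule Phi_ennreal) simp
    finally show ?thesis .
  qed
  have um: "(\<lambda>x. ennreal (u x)) \<in> borel_measurable \<mu>" using u by (rule measurable_compose[OF _ measurable_ennreal])
  have "Phi (\<lambda>x. ennreal (u x)) \<in> borel_measurable (\<tau> n)"
    using CV[OF tau sp ss um] n by blast
  then have "(\<lambda>G. enn2real (Phi (\<lambda>x. ennreal (u x)) G)) \<in> borel_measurable (\<tau> n)"
    by (rule borel_measurable_enn2real)
  moreover have "enn2real (Phi (\<lambda>x. ennreal (u x)) G) = sum_mset (image_mset (\<lambda>x. max 0 (u x)) G)" for G
    unfolding e by (simp add: sum_mset_max0)
  ultimately show "(\<lambda>G. sum_mset (image_mset (\<lambda>x. max 0 (u x)) G)) \<in> borel_measurable (\<tau> n)" by simp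
  show "(\<integral>\<^sup>+G. ennreal (sum_mset (image_mset (\<lambda>x. max 0 (u x)) G)) \<partial>\<tau> n) = (\<integral>\<^sup>+G. Phi (\<lambda>x. ennreal (u x)) G \<partial>\<tau> n)"
    unfolding e ..
qed

lemma CVR:
  assumes tau: "\<tau> \<in> assignments I \<mu> N' N" and sp: "space \<mu> = I"
    and ss: "sets \<mu> = sigma_sets I ((\<inter>) I ` {S. open S})"
    and u: "integrable \<mu> u"
  shows "(\<forall>n\<in>{N'..N}. integrable (\<tau> n) (gsum u)) \<and> (\<integral>x. u x \<partial>\<mu>) = (\<Sum>n=N'..N. \<integral>G. gsum u G \<partial>\<tau> n)"
proof -
  have um: "u \<in> borel_measurable \<mu>" using u by simp
  have umn: "(\<lambda>x. - u x) \<in> borel_measurable \<mu>" using um by (rule borel_measurable_uminus)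
  let ?P = "\<lambda>G. sum_mset (image_mset (\<lambda>x. max 0 (u x)) G)"
  let ?Q = "\<lambda>G. sum_mset (image_mset (\<lambda>x. max 0 (- u x)) G)"
  let ?XP = "\<lambda>n. \<integral>\<^sup>+G. Phi (\<lambda>x. ennreal (u x)) G \<partial>\<tau> n"
  let ?XQ = "\<lambda>n. \<integral>\<^sup>+G. Phi (\<lambda>x. ennreal (- u x)) G \<partial>\<tau> n"
  have eP: "(\<integral>\<^sup>+x. ennreal (u x) \<partial>\<mu>) = (\<Sum>n=N'..N. ?XP n)"
    using CV[OF tau sp ss measurable_compose[OF um measurable_ennreal]] by blast
  have eQ: "(\<integral>\<^sup>+x. ennreal (- u x) \<partial>\<mu>) = (\<Sum>n=N'..N. ?XQ n)"
    using CV[OF tau sp ss measurable_compose[OF umn measurable_ennreal]] by blast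
  have fP: "(\<integral>\<^sup>+x. ennreal (u x) \<partial>\<mu>) < \<infinity>"
  proof -
    have "(\<integral>\<^sup>+x. ennreal (u x) \<partial>\<mu>) \<le> (\<integral>\<^sup>+x. ennreal (norm (u x)) \<partial>\<mu>)"
      by (intro nn_integral_mono) (simp add: ennreal_leI)
    also have "\<dots> < \<infinity>" using u by (simp add: integrable_iff_bounded)
    finally show ?thesis .
  qed
  have fQ: "(\<integral>\<^sup>+x. ennreal (- u x) \<partial>\<mu>) < \<infinity>"
  proof -
    have "(\<integral>\<^sup>+x. ennreal (- u x) \<partial>\<mu>) \<le> (\<integral>\<^sup>+x. ennreal (norm (u x)) \<partial>\<mu>)"
      by (intro nn_integral_mono) (simp add: ennreal_leI)
    also have "\<dots> < \<infinity>" using u by (simp add: integrable_iff_bounded)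
    finally show ?thesis .
  qed
  have XPf: "?XP n < \<infinity>" if n: "n \<in> {N'..N}" for n
  proof -
    have "?XP n \<le> (\<Sum>n=N'..N. ?XP n)" using n by (intro member_le_sum) auto
    also have "\<dots> = (\<integral>\<^sup>+x. ennreal (u x) \<partial>\<mu>)" by (rule eP[symmetric])
    also have "\<dots> < \<infinity>" by (rule fP)
    finally show ?thesis .
  qed
  have XQf: "?XQ n < \<infinity>" if n: "n \<in> {N'..N}" for n
  proof -
    have "?XQ n \<le> (\<Sum>n=N'..N. ?XQ n)" using n by (intro member_le_sum) auto
    also have "\<dots> = (\<integral>\<^sup>+x. ennreal (- u x) \<partial>\<mu>)" by (rule eQ[symmetric])
    also have "\<dots> < \<infinity>" by (rule fQ)
    finally show ?thesis .
  qed
  have intP: "integrable (\<tau> n) ?P" and iP: "(\<integral>G. ?P G \<partial>\<tau> n) = enn2real (?XP n)" if n: "n \<in> {N'..N}" for n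
  proof -
    note pm = pos_part_meas[OF tau sp ss um n]
    show "integrable (\<tau> n) ?P"
      using pm XPf[OF n] by (intro integrableI_nonneg) (auto simp: sum_mset_max0)
    show "(\<integral>G. ?P G \<partial>\<tau> n) = enn2real (?XP n)"
      using pm by (subst integral_eq_nn_integral) (auto simp: sum_mset_max0)
  qed
  have intQ: "integrable (\<tau> n) ?Q" and iQ: "(\<integral>G. ?Q G \<partial>\<tau> n) = enn2real (?XQ n)" if n: "n \<in> {N'..N}" for n
  proof -
    note pm = pos_part_meas[OF tau sp ss umn n]
    show "integrable (\<tau> n) ?Q"
      using pm XQf[OF n] by (intro integrableI_nonneg) (auto simp: sum_mset_max0)
    show "(\<integral>G. ?Q G \<partial>\<tau> n) = enn2real (?XQ n)"
      using pm by (subst integral_eq_nn_integral) (auto simp: sum_mset_max0)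
  qed
  have gs: "gsum u = (\<lambda>G. ?P G - ?Q G)" by (rule ext) (rule gsum_split)
  have intg: "\<forall>n\<in>{N'..N}. integrable (\<tau> n) (gsum u)"
    unfolding gs using intP intQ by (intro ballI Bochner_Integration.integrable_diff) auto
  have "(\<Sum>n=N'..N. \<integral>G. gsum u G \<partial>\<tau> n) = (\<Sum>n=N'..N. enn2real (?XP n) - enn2real (?XQ n))"
    unfolding gs using intP intQ iP iQ by (intro sum.cong refl) simp
  also have "\<dots> = (\<Sum>n=N'..N. enn2real (?XP n)) - (\<Sum>n=N'..N. enn2real (?XQ n))"
    by (simp add: sum_subtractf)
  also have "\<dots> = enn2real (\<Sum>n=N'..N. ?XP n) - enn2real (\<Sum>n=N'..N. ?XQ n)"
  proof -
    have "enn2real (\<Sum>n=N'..N. ?XP n) = (\<Sum>n=N'..N. enn2real (?XP n))"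
      using enn2real_sum[of "{N'..N}" ?XP] XPf by (simp add: comp_def)
    moreover have "enn2real (\<Sum>n=N'..N. ?XQ n) = (\<Sum>n=N'..N. enn2real (?XQ n))"
      using enn2real_sum[of "{N'..N}" ?XQ] XQf by (simp add: comp_def)
    ultimately show ?thesis by simp
  qed
  also have "\<dots> = (\<integral>x. u x \<partial>\<mu>)"
    unfolding eP[symmetric] eQ[symmetric] using u by (simp add: real_lebesgue_integral_def)
  finally show ?thesis using intg by simp
qed

lemma gsum_tuple: "gsum u (tuple_mset n x) = (\<Sum>j<n. u (x j))"
  unfolding gsum_def tuple_mset_def by (simp add: sum_unfold_sum_mset image_mset.compositionality comp_def)

lemma gsum_cont:
  assumes "continuous_on I u"
  shows "continuous_map (Gtop I n) euclideanreal (gsum u)"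
  unfolding continuous_Gtop_iff
proof -
  have "continuous_map (tuple_top I n) euclideanreal (\<lambda>x. \<Sum>j<n. u (x j))"
  proof (rule continuous_map_sum)
    fix j assume j: "j \<in> {..<n}"
    have "continuous_map (tuple_top I n) (top_of_set I) (\<lambda>x. x j)"
      unfolding tuple_top_def using j by (intro continuous_map_product_projection) auto
    moreover have "continuous_map (top_of_set I) euclideanreal u" using assms by simp
    ultimately show "continuous_map (tuple_top I n) euclideanreal (\<lambda>x. u (x j))"
      using continuous_map_compose[of _ _ "\<lambda>x. x j" _ u] by (simp add: comp_def)
  qed simp
  moreover have "gsum u \<circ> tuple_mset n = (\<lambda>x. \<Sum>j<n. u (x j))"
    by (rule ext) (simp add: gsum_tuple)
  ultimately show "continuous_map (tuple_top I n) euclideanreal (gsum u \<circ> tuple_mset n)" by simp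
qed

lemma compact_space_tuple:
  fixes I :: "'a::metric_space set"
  assumes "compact I" shows "compact_space (tuple_top I n)"
  unfolding tuple_top_def compact_space_product_topology
  using assms by (simp add: compact_space_subtopology)

lemma dist_sum_cont:
  fixes I :: "'a::metric_space set"
  shows "continuous_map (tuple_top I n) euclideanreal (\<lambda>x. \<Sum>j<n. dist (x j) (y j))"
proof (rule continuous_map_sum)
  fix j assume j: "j \<in> {..<n}"
  have "continuous_map (tuple_top I n) (top_of_set I) (\<lambda>x. x j)"
    unfolding tuple_top_def using j by (intro continuous_map_product_projection) auto
  moreover have "continuous_map (top_of_set I) euclideanreal (\<lambda>z. dist z (y j))"
    by (simp add: continuous_on_dist continuous_on_id continuous_on_const)
  ultimately show "continuous_map (tuple_top I n) euclideanreal (\<lambda>x. dist (x j) (y j))"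
    using continuous_map_compose[of _ _ "\<lambda>x. x j" _ "\<lambda>z. dist z (y j)"] by (simp add: comp_def)
qed simp

lemma countable_subcover:
  fixes I :: "'a::metric_space set"
  assumes cI: "compact I" and F: "\<forall>V\<in>\<F>. openin (tuple_top I n) V"
  shows "\<exists>\<C>. countable \<C> \<and> \<C> \<subseteq> \<F> \<and> \<Union>\<F> \<subseteq> \<Union>\<C>"
proof -
  let ?X = "tuple_top I n"
  let ?PS = "topspace ?X"
  let ?W = "\<Union>\<F>"
  define d where "d x y = (\<Sum>j<n. dist (x j) (y j))" for x y :: "nat \<Rightarrow> 'a"
  define K where "K m = {x \<in> ?PS. \<forall>y \<in> ?PS - ?W. 1 / real (Suc m) \<le> d x y}" for m
  have Wsub: "?W \<subseteq> ?PS" using F openin_subset by blast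
  have closedK: "closedin ?X (K m)" for m
  proof (cases "?PS - ?W = {}")
    case True
    then have "K m = ?PS" unfolding K_def by blast
    then show ?thesis by simp
  next
    case False
    obtain y0 where y0: "y0 \<in> ?PS - ?W" using False by blast
    have "K m = \<Inter>((\<lambda>y. {x \<in> ?PS. d x y \<in> {1 / real (Suc m)..}}) ` (?PS - ?W))"
    proof (intro equalityI subsetI)
      fix x assume "x \<in> K m"
      then show "x \<in> \<Inter>((\<lambda>y. {x \<in> ?PS. d x y \<in> {1 / real (Suc m)..}}) ` (?PS - ?W))"
        unfolding K_def by simp
    next
      fix x assume x: "x \<in> \<Inter>((\<lambda>y. {x \<in> ?PS. d x y \<in> {1 / real (Suc m)..}}) ` (?PS - ?W))"
      then have "x \<in> {x \<in> ?PS. d x y0 \<in> {1 / real (Suc m)..}}" using y0 by blast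
      then have "x \<in> ?PS" by simp
      moreover have "\<forall>y \<in> ?PS - ?W. 1 / real (Suc m) \<le> d x y" using x by simp
      ultimately show "x \<in> K m" unfolding K_def by simp
    qed
    moreover have "closedin ?X (\<Inter>((\<lambda>y. {x \<in> ?PS. d x y \<in> {1 / real (Suc m)..}}) ` (?PS - ?W)))"
    proof (rule closedin_Inter)
      show "(\<lambda>y. {x \<in> ?PS. d x y \<in> {1 / real (Suc m)..}}) ` (?PS - ?W) \<noteq> {}" using False by blast
      fix S assume "S \<in> (\<lambda>y. {x \<in> ?PS. d x y \<in> {1 / real (Suc m)..}}) ` (?PS - ?W)"
      then obtain y where S: "S = {x \<in> ?PS. d x y \<in> {1 / real (Suc m)..}}" by blast
      have c: "continuous_map ?X euclideanreal (\<lambda>x. d x y)"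
        unfolding d_def by (rule dist_sum_cont)
      show "closedin ?X S" unfolding S
        by (rule closedin_continuous_map_preimage[OF c]) (simp add: closed_closedin[symmetric])
    qed
    ultimately show ?thesis by simp
  qed
  have compK: "compactin ?X (K m)" for m
    by (rule closedin_compact_space[OF compact_space_tuple[OF cI] closedK])
  have KW: "K m \<subseteq> ?W" for m
  proof
    fix x assume x: "x \<in> K m"
    show "x \<in> ?W"
    proof (rule ccontr)
      assume "x \<notin> ?W"
      then have "1 / real (Suc m) \<le> d x x" using x unfolding K_def by blast
      moreover have "d x x = 0" unfolding d_def by simp
      ultimately show False by simp
    qed
  qed
  have WK: "?W \<subseteq> (\<Union>m. K m)"
  proof
    fix x assume "x \<in> ?W"
    then obtain V where V: "V \<in> \<F>" "x \<in> V" by blast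
    have Vo: "openin ?X V" using F V by blast
    obtain Xs where Xs: "x \<in> (\<Pi>\<^sub>E i\<in>{..<n}. Xs i)" "\<forall>i. openin (top_of_set I) (Xs i)"
      "(\<Pi>\<^sub>E i\<in>{..<n}. Xs i) \<subseteq> V"
      using product_topology_open_contains_basis[OF Vo[unfolded tuple_top_def] V(2)] by blast
    have "\<forall>j\<in>{..<n}. \<exists>e>0. \<forall>z\<in>I. dist z (x j) < e \<longrightarrow> z \<in> Xs j"
    proof
      fix j assume j: "j \<in> {..<n}"
      then have "x j \<in> Xs j" using Xs(1) by (simp add: PiE_iff)
      then show "\<exists>e>0. \<forall>z\<in>I. dist z (x j) < e \<longrightarrow> z \<in> Xs j"
        using Xs(2) openin_euclidean_subtopology_iff[of I "Xs j"] by blast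
    qed
    then obtain ef where ef: "\<forall>j\<in>{..<n}. ef j > 0 \<and> (\<forall>z\<in>I. dist z (x j) < ef j \<longrightarrow> z \<in> Xs j)"
      by (rule bchoice[THEN exE])
    define \<epsilon> where "\<epsilon> = Min (insert 1 (ef ` {..<n}))"
    have epos: "\<epsilon> > 0" unfolding \<epsilon>_def using ef by (subst Min_gr_iff) auto
    have ele: "\<epsilon> \<le> ef j" if "j < n" for j unfolding \<epsilon>_def using that by (intro Min_le) auto
    obtain m where m: "inverse (real (Suc m)) < \<epsilon>" using reals_Archimedean[OF epos] by blast
    have xPS: "x \<in> ?PS" using Vo V(2) openin_subset by blast
    have "x \<in> K m" unfolding K_def
    proof (intro CollectI conjI ballI xPS)
      fix y assume y: "y \<in> ?PS - ?W"
      show "1 / real (Suc m) \<le> d x y"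
      proof (rule ccontr)
        assume "\<not> 1 / real (Suc m) \<le> d x y"
        then have dxy: "d x y < \<epsilon>" using m by (simp add: inverse_eq_divide)
        have yPS: "y \<in> (\<Pi>\<^sub>E i\<in>{..<n}. I)" using y by (simp add: topspace_tuple)
        have "y \<in> (\<Pi>\<^sub>E i\<in>{..<n}. Xs i)"
        proof (rule PiE_I)
          fix j assume j: "j \<in> {..<n}"
          have "dist (x j) (y j) \<le> d x y"
            unfolding d_def using j by (intro member_le_sum) auto
          then have "dist (y j) (x j) < ef j" using dxy ele[of j] j by (simp add: dist_commute)
          moreover have "y j \<in> I" using yPS j by (simp add: PiE_iff)
          ultimately show "y j \<in> Xs j" using ef j by blast
        next
          fix j assume "j \<notin> {..<n}"
          then show "y j = undefined" using yPS by (simp add: PiE_iff extensional_def)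
        qed
        then have "y \<in> ?W" using Xs(3) V(1) by blast
        then show False using y by blast
      qed
    qed
    then show "x \<in> (\<Union>m. K m)" by blast
  qed
  have "\<forall>m. \<exists>Fm. finite Fm \<and> Fm \<subseteq> \<F> \<and> K m \<subseteq> \<Union>Fm"
  proof
    fix m
    have "K m \<subseteq> \<Union>\<F>" using KW by blast
    have "\<forall>\<U>. (\<forall>U\<in>\<U>. openin ?X U) \<and> K m \<subseteq> \<Union>\<U> \<longrightarrow> (\<exists>\<G>. finite \<G> \<and> \<G> \<subseteq> \<U> \<and> K m \<subseteq> \<Union>\<G>)"
      using compK[of m] unfolding compactin_def by (elim conjE)
    then have "(\<forall>U\<in>\<F>. openin ?X U) \<and> K m \<subseteq> \<Union>\<F> \<longrightarrow> (\<exists>\<G>. finite \<G> \<and> \<G> \<subseteq> \<F> \<and> K m \<subseteq> \<Union>\<G>)"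
      by (rule spec)
    then show "\<exists>Fm. finite Fm \<and> Fm \<subseteq> \<F> \<and> K m \<subseteq> \<Union>Fm"
      using F \<open>K m \<subseteq> \<Union>\<F>\<close> by blast
  qed
  then obtain Fm where Fm0: "\<forall>m. finite (Fm m) \<and> Fm m \<subseteq> \<F> \<and> K m \<subseteq> \<Union>(Fm m)"
    by (rule choice[THEN exE])
  then have Fm: "\<And>m. finite (Fm m) \<and> Fm m \<subseteq> \<F> \<and> K m \<subseteq> \<Union>(Fm m)" by blast
  show ?thesis
  proof (intro exI conjI)
    show "countable (\<Union>m. Fm m)" using Fm by (intro countable_UN) (auto intro: countable_finite)
    show "(\<Union>m. Fm m) \<subseteq> \<F>" using Fm by blast
    show "\<Union>\<F> \<subseteq> \<Union>(\<Union>m. Fm m)"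
    proof
      fix x assume "x \<in> \<Union>\<F>"
      then obtain m where "x \<in> K m" using WK by blast
      then obtain V where "V \<in> Fm m" "x \<in> V" using Fm[of m] by blast
      then show "x \<in> \<Union>(\<Union>m. Fm m)" by blast
    qed
  qed
qed

lemma supp_ae:
  fixes I :: "'a::metric_space set"
  assumes cI: "compact I" and st: "sets M = sets (borel_top (Gtop I n))"
  shows "AE G in M. G \<in> msupp (Gtop I n) M"
proof -
  let ?X = "tuple_top I n"
  let ?pre = "\<lambda>U. {x \<in> topspace ?X. tuple_mset n x \<in> U}"
  have spM: "space M = Gn I n"
    using sets_eq_imp_space_eq[OF st] by (simp add: space_bt)
  define \<F> where "\<F> = {V. \<exists>U. openin (Gtop I n) U \<and> emeasure M U = 0 \<and> V = ?pre U}"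
  have Fo: "\<forall>V\<in>\<F>. openin ?X V" unfolding \<F>_def openin_Gtop by blast
  obtain \<C> where C: "countable \<C>" "\<C> \<subseteq> \<F>" "\<Union>\<F> \<subseteq> \<Union>\<C>"
    using countable_subcover[OF cI Fo] by blast
  have "\<forall>V\<in>\<C>. \<exists>U. openin (Gtop I n) U \<and> emeasure M U = 0 \<and> V = ?pre U"
    using C(2) unfolding \<F>_def by blast
  then obtain Uf where Uf0: "\<forall>V\<in>\<C>. openin (Gtop I n) (Uf V) \<and> emeasure M (Uf V) = 0 \<and> V = ?pre (Uf V)"
    by (rule bchoice[THEN exE])
  then have Uf: "\<And>V. V \<in> \<C> \<Longrightarrow> openin (Gtop I n) (Uf V) \<and> emeasure M (Uf V) = 0 \<and> V = ?pre (Uf V)"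
    by blast
  have null: "(\<Union>V\<in>\<C>. Uf V) \<in> null_sets M"
  proof (rule null_sets_UN'[OF C(1)])
    fix V assume V: "V \<in> \<C>"
    have "Uf V \<in> sets M" using Uf[OF V] openin_sets_borel_top st by blast
    then show "Uf V \<in> null_sets M" using Uf[OF V] by (simp add: null_sets_def)
  qed
  show ?thesis
  proof (rule AE_I'[OF null])
    show "{G \<in> space M. \<not> G \<in> msupp (Gtop I n) M} \<subseteq> (\<Union>V\<in>\<C>. Uf V)"
    proof
      fix G assume G: "G \<in> {G \<in> space M. \<not> G \<in> msupp (Gtop I n) M}"
      then have Gn: "G \<in> Gn I n" using spM by simp
      then have "G \<in> topspace (Gtop I n)" by (simp add: topspace_Gtop)
      then obtain U where U: "openin (Gtop I n) U" "G \<in> U" "\<not> emeasure M U > 0"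
        using G unfolding msupp_def by blast
      then have U0: "emeasure M U = 0" by (simp add: not_gr_zero)
      obtain x where x: "x \<in> PiE {..<n} (\<lambda>_. I)" "tuple_mset n x = G"
        using tuple_mset_surj[OF Gn] by blast
      have "?pre U \<in> \<F>" unfolding \<F>_def using U U0 by blast
      moreover have "x \<in> ?pre U" using x U(2) by (simp add: topspace_tuple)
      ultimately obtain V where V: "V \<in> \<C>" "x \<in> V" using C(3) by blast
      then have "x \<in> ?pre (Uf V)" using Uf[OF V(1)] by simp
      then have "G \<in> Uf V" using x by simp
      then show "G \<in> (\<Union>V\<in>\<C>. Uf V)" using V by blast
    qed
  qed
qed

lemma Gn_Gall: "n \<in> {N'..N} \<Longrightarrow> Gn I n \<subseteq> Gall I N' N"
  unfolding Gall_def by blast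

lemma s_meas:
  assumes tau: "\<tau> \<in> assignments I \<mu> N' N" and n: "n \<in> {N'..N}"
    and cont: "continuous_map (Gtop I n) euclideanreal s"
  shows "s \<in> borel_measurable (\<tau> n)"
  by (subst meas_tau[OF tau n]) (rule cont_measurable[OF cont])

lemma s_int:
  assumes tau: "\<tau> \<in> assignments I \<mu> N' N" and n: "n \<in> {N'..N}"
    and cont: "continuous_map (Gtop I n) euclideanreal s"
    and nonneg: "\<forall>G\<in>Gall I N' N. s G \<ge> 0"
    and u: "u \<in> dual_set I \<mu> s N' N" and gi: "integrable (\<tau> n) (gsum u)"
  shows "integrable (\<tau> n) s"
proof (rule Bochner_Integration.integrable_bound[OF gi s_meas[OF tau n cont]])
  show "AE x in \<tau> n. norm (s x) \<le> norm (gsum u x)"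
  proof (rule AE_I2)
    fix G assume "G \<in> space (\<tau> n)"
    then have "G \<in> Gall I N' N" using space_tau[OF tau n] Gn_Gall[OF n] by blast
    then have "0 \<le> s G" "s G \<le> gsum u G" using nonneg u unfolding dual_set_def by auto
    then show "norm (s G) \<le> norm (gsum u G)" by simp
  qed
qed

lemma WD:
  assumes tau: "\<tau> \<in> assignments I \<mu> N' N" and sp: "space \<mu> = I"
    and ss: "sets \<mu> = sigma_sets I ((\<inter>) I ` {S. open S})"
    and cont: "\<forall>n\<in>{N'..N}. continuous_map (Gtop I n) euclideanreal s"
    and nonneg: "\<forall>G\<in>Gall I N' N. s G \<ge> 0"
    and u: "u \<in> dual_set I \<mu> s N' N"
  shows "surplus_value s N' N \<tau> \<le> (\<integral>i. u i \<partial>\<mu>)"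
proof -
  have ui: "integrable \<mu> u" using u unfolding dual_set_def by blast
  note cv = CVR[OF tau sp ss ui]
  have "surplus_value s N' N \<tau> = (\<Sum>n=N'..N. \<integral>G. s G \<partial>\<tau> n)" unfolding surplus_value_def ..
  also have "\<dots> \<le> (\<Sum>n=N'..N. \<integral>G. gsum u G \<partial>\<tau> n)"
  proof (rule sum_mono)
    fix n assume n: "n \<in> {N'..N}"
    have gi: "integrable (\<tau> n) (gsum u)" using cv n by blast
    show "(\<integral>G. s G \<partial>\<tau> n) \<le> (\<integral>G. gsum u G \<partial>\<tau> n)"
    proof (rule integral_mono[OF s_int[OF tau n _ nonneg u gi] gi])
      show "continuous_map (Gtop I n) euclideanreal s" using cont n by blast
      fix G assume "G \<in> space (\<tau> n)"
      then have "G \<in> Gall I N' N" using space_tau[OF tau n] Gn_Gall[OF n] by blast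
      then show "s G \<le> gsum u G" using u unfolding dual_set_def by auto
    qed
  qed
  also have "\<dots> = (\<integral>i. u i \<partial>\<mu>)" using cv by simp
  finally show ?thesis .
qed

theorem lemma8:
  fixes I :: "'a::metric_space set" and \<mu> :: "'a measure"
    and s :: "'a multiset \<Rightarrow> real" and N' N :: nat
  assumes "compact I"
    and "space \<mu> = I" and "sets \<mu> = sets (restrict_space borel I)" and "finite_measure \<mu>"
    and "2 \<le> N" and "1 \<le> N'" and "N' \<le> N"
    and "\<forall>G\<in>Gall I N' N. s G \<ge> 0"
    and "\<forall>n\<in>{N'..N}. continuous_map (Gtop I n) euclideanreal s"
    and duality: "Sup (surplus_value s N' N ` assignments I \<mu> N' N)
                  = Inf ((\<lambda>u. \<integral>i. u i \<partial>\<mu>) ` dual_set I \<mu> s N' N)"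
  shows "(\<forall>\<tau> u. \<tau> \<in> assignments I \<mu> N' N
             \<and> surplus_value s N' N \<tau> = Sup (surplus_value s N' N ` assignments I \<mu> N' N)
             \<and> u \<in> dual_set I \<mu> s N' N \<and> continuous_on I u
             \<and> (\<integral>i. u i \<partial>\<mu>) = Inf ((\<lambda>u. \<integral>i. u i \<partial>\<mu>) ` dual_set I \<mu> s N' N)
           \<longrightarrow> stable I \<mu> s N' N \<tau> u)
       \<and> (\<forall>\<tau> u. stable I \<mu> s N' N \<tau> u \<longrightarrow>
             surplus_value s N' N \<tau> = Sup (surplus_value s N' N ` assignments I \<mu> N' N)
             \<and> u \<in> dual_set I \<mu> s N' N
             \<and> (\<integral>i. u i \<partial>\<mu>) = Inf ((\<lambda>u. \<integral>i. u i \<partial>\<mu>) ` dual_set I \<mu> s N' N))"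
proof -
  note cI = assms(1) and sp = assms(2) and nonneg = assms(8) and cont = assms(9)
  have ss: "sets \<mu> = sigma_sets I ((\<inter>) I ` {S. open S})"
    by (rule sets_mu_sigma[OF assms(1) assms(3)])
  let ?Sv = "Sup (surplus_value s N' N ` assignments I \<mu> N' N)"
  let ?Iv = "Inf ((\<lambda>u. \<integral>i. u i \<partial>\<mu>) ` dual_set I \<mu> s N' N)"
  have part1: "stable I \<mu> s N' N \<tau> u"
    if tau: "\<tau> \<in> assignments I \<mu> N' N" and opt: "surplus_value s N' N \<tau> = ?Sv"
      and u: "u \<in> dual_set I \<mu> s N' N" and uc: "continuous_on I u" and uopt: "(\<integral>i. u i \<partial>\<mu>) = ?Iv"
    for \<tau> u
  proof -
    have ui: "integrable \<mu> u" using u unfolding dual_set_def by blast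
    note cv = CVR[OF tau sp ss ui]
    have eq: "surplus_value s N' N \<tau> = (\<integral>i. u i \<partial>\<mu>)" using opt uopt duality by simp
    have gi: "integrable (\<tau> n) (gsum u)" if n: "n \<in> {N'..N}" for n using cv n by blast
    have si: "integrable (\<tau> n) s" if n: "n \<in> {N'..N}" for n
      using s_int[OF tau n _ nonneg u gi[OF n]] cont n by blast
    have ge: "s G \<le> gsum u G" if "n \<in> {N'..N}" "G \<in> space (\<tau> n)" for n G
    proof -
      have "G \<in> Gall I N' N" using that space_tau[OF tau] Gn_Gall by blast
      then show ?thesis using u unfolding dual_set_def by auto
    qed
    have nn: "0 \<le> (\<integral>G. gsum u G - s G \<partial>\<tau> n)" if n: "n \<in> {N'..N}" for n
      using ge[OF n] by (intro integral_nonneg_AE AE_I2) auto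
    have "(\<Sum>n=N'..N. \<integral>G. gsum u G - s G \<partial>\<tau> n) = (\<Sum>n=N'..N. (\<integral>G. gsum u G \<partial>\<tau> n) - (\<integral>G. s G \<partial>\<tau> n))"
      using gi si by (intro sum.cong refl) simp
    also have "\<dots> = (\<integral>i. u i \<partial>\<mu>) - surplus_value s N' N \<tau>"
      using cv unfolding surplus_value_def by (simp add: sum_subtractf)
    also have "\<dots> = 0" using eq by simp
    finally have "(\<Sum>n=N'..N. \<integral>G. gsum u G - s G \<partial>\<tau> n) = 0" .
    then have z: "\<forall>n\<in>{N'..N}. (\<integral>G. gsum u G - s G \<partial>\<tau> n) = 0"
      using sum_nonneg_eq_0_iff[of "{N'..N}" "\<lambda>n. \<integral>G. gsum u G - s G \<partial>\<tau> n"] nn by simp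
    have feas: "gsum u G \<le> s G" if n: "n \<in> {N'..N}" and G: "G \<in> msupp (Gtop I n) (\<tau> n)" for n G
    proof (rule ccontr)
      assume "\<not> gsum u G \<le> s G"
      then have pos: "0 < gsum u G - s G" by simp
      let ?f = "\<lambda>H. gsum u H - s H"
      have fc: "continuous_map (Gtop I n) euclideanreal ?f"
        using gsum_cont[OF uc, of n] cont n by (intro continuous_map_diff) auto
      have fm: "?f \<in> borel_measurable (\<tau> n)"
        by (subst meas_tau[OF tau n]) (rule cont_measurable[OF fc])
      have fi: "integrable (\<tau> n) ?f" using gi[OF n] si[OF n] by simp
      have "(\<integral>\<^sup>+H. ennreal (?f H) \<partial>\<tau> n) = ennreal (\<integral>H. ?f H \<partial>\<tau> n)"
        using fi ge[OF n] by (intro nn_integral_eq_integral AE_I2) auto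
      also have "\<dots> = 0" using z n by simp
      finally have "(\<integral>\<^sup>+H. ennreal (?f H) \<partial>\<tau> n) = 0" .
      then have "AE H in \<tau> n. ennreal (?f H) = 0"
        using nn_integral_0_iff_AE[of "\<lambda>H. ennreal (?f H)" "\<tau> n"] fm
        by (simp add: measurable_compose[OF fm measurable_ennreal])
      then obtain Nn where Nn: "{H \<in> space (\<tau> n). \<not> ennreal (?f H) = 0} \<subseteq> Nn" "emeasure (\<tau> n) Nn = 0"
          "Nn \<in> sets (\<tau> n)"
        by (rule AE_E)
      let ?U = "{H \<in> topspace (Gtop I n). ?f H \<in> {0<..}}"
      have Uo: "openin (Gtop I n) ?U"
        by (rule openin_continuous_map_preimage[OF fc]) simp
      have GU: "G \<in> ?U" using G pos unfolding msupp_def by simp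
      have "0 < emeasure (\<tau> n) ?U" using G Uo GU unfolding msupp_def by blast
      moreover have "?U \<subseteq> Nn"
      proof
        fix H assume H: "H \<in> ?U"
        then have "H \<in> topspace (Gtop I n)" by simp
        then have "H \<in> space (\<tau> n)" by (simp add: space_tau[OF tau n] topspace_Gtop)
        moreover have "ennreal (?f H) \<noteq> 0" using H by simp
        ultimately show "H \<in> Nn" using Nn(1) by blast
      qed
      then have "emeasure (\<tau> n) ?U \<le> emeasure (\<tau> n) Nn" by (rule emeasure_mono[OF _ Nn(3)])
      ultimately show False using Nn(2) by simp
    qed
    show ?thesis unfolding stable_def
      using tau ui feas u unfolding dual_set_def by blast
  qed
  have part2: "surplus_value s N' N \<tau> = ?Sv \<and> u \<in> dual_set I \<mu> s N' N \<and> (\<integral>i. u i \<partial>\<mu>) = ?Iv"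
    if st: "stable I \<mu> s N' N \<tau> u" for \<tau> u
  proof -
    have tau: "\<tau> \<in> assignments I \<mu> N' N" and ui: "integrable \<mu> u"
      and feas: "\<forall>n\<in>{N'..N}. \<forall>G\<in>msupp (Gtop I n) (\<tau> n). gsum u G \<le> s G"
      and nb: "\<forall>G\<in>Gall I N' N. gsum u G \<ge> s G"
      using st unfolding stable_def by blast+
    have u: "u \<in> dual_set I \<mu> s N' N" unfolding dual_set_def using ui nb by blast
    note cv = CVR[OF tau sp ss ui]
    have "(\<integral>G. s G \<partial>\<tau> n) = (\<integral>G. gsum u G \<partial>\<tau> n)" if n: "n \<in> {N'..N}" for n
    proof (rule integral_cong_AE)
      show "s \<in> borel_measurable (\<tau> n)" using s_meas[OF tau n] cont n by blast
      show "gsum u \<in> borel_measurable (\<tau> n)" using cv n by blast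
      have "AE G in \<tau> n. G \<in> msupp (Gtop I n) (\<tau> n)"
        by (rule supp_ae[OF cI sets_tau[OF tau n]])
      then show "AE G in \<tau> n. s G = gsum u G"
      proof (rule AE_mp[OF _ AE_I2])
        fix G assume G: "G \<in> space (\<tau> n)"
        then have "G \<in> Gall I N' N" using space_tau[OF tau n] Gn_Gall[OF n] by blast
        then show "G \<in> msupp (Gtop I n) (\<tau> n) \<longrightarrow> s G = gsum u G"
          using feas nb n by force
      qed
    qed
    then have eq: "surplus_value s N' N \<tau> = (\<integral>i. u i \<partial>\<mu>)"
      using cv unfolding surplus_value_def by simp
    have "?Sv = surplus_value s N' N \<tau>"
    proof (rule cSup_eq_maximum)
      show "surplus_value s N' N \<tau> \<in> surplus_value s N' N ` assignments I \<mu> N' N" using tau by blast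
      fix x assume "x \<in> surplus_value s N' N ` assignments I \<mu> N' N"
      then obtain \<tau>' where \<tau>': "\<tau>' \<in> assignments I \<mu> N' N" "x = surplus_value s N' N \<tau>'" by blast
      then show "x \<le> surplus_value s N' N \<tau>" using WD[OF \<tau>'(1) sp ss cont nonneg u] eq by simp
    qed
    moreover have "?Iv = (\<integral>i. u i \<partial>\<mu>)"
    proof (rule cInf_eq_minimum)
      show "(\<integral>i. u i \<partial>\<mu>) \<in> (\<lambda>u. \<integral>i. u i \<partial>\<mu>) ` dual_set I \<mu> s N' N" using u by blast
      fix x assume "x \<in> (\<lambda>u. \<integral>i. u i \<partial>\<mu>) ` dual_set I \<mu> s N' N"
      then obtain u' where u': "u' \<in> dual_set I \<mu> s N' N" "x = (\<integral>i. u' i \<partial>\<mu>)" by blast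
      then show "(\<integral>i. u i \<partial>\<mu>) \<le> x" using WD[OF tau sp ss cont nonneg u'(1)] eq by simp
    qed
    ultimately show ?thesis using u by simp
  qed
  show ?thesis using part1 part2 by blast
qed

end
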